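(* For every ${\bf F}(z)\in\hat\Lambda^{(s)}\otimes V$ and every $N\ge2$, $$(\bar\pi_{N-1}\otimes1)\big(\mathcal D{\bf F}\big)(x_1)=\mathcal D^{(N)}_1\,(\bar\pi_{N-1}\otimes1){\bf F}(x_1).$$
   Context: Fix $s\ge1$, $\beta\in{\mathbb C}$. Let $\hat\Lambda^{(s)}={\mathbb C}[p_{a,k}: a=1,\dots,s,\ k\ge0]$, $e_1,\dots,e_s$ the standard basis of ${\mathbb C}^s$, $V={\mathbb C}[z]\otimes{\mathbb C}^s$. For $c=1,\dots,s$: $\Phi_c(z)$ is the substitution $p_{c,k}\mapsto p_{c,k}+z^k$ ($k\ge0$), $\Phi_c^{-1}(z)$ the substitution $p_{c,k}\mapsto p_{c,k}-z^k$ ($k\ge0$), and $\varphi^-_c(z)=\sum_{k\ge0}p_{c,k}z^{-k}$. $\langle0|_+$ is the constant-term functional on $\hat\Lambda^{(s)}$. For ${\bf F}(z)=\sum_cF_c(z)\otimes e_c$ ($F_c\in\hat\Lambda^{(s)}[z]$), $(\bar\pi_{N-1}\otimes1){\bf F}(x_1)=\sum_{c_1,\dots,c_N}\langle0|_+\Phi_{c_N}(x_N)\cdots\Phi_{c_2}(x_2)F_{c_1}(x_1)\,e_{c_1}\otimes\cdots\otimes e_{c_N}$, a $({\mathbb C}^s)^{\otimes N}$-valued polynomial in $x_1,\dots,x_N$ (the $i$-th factor carries $x_i$). The operator $\mathcal D$ on $\hat\Lambda^{(s)}\otimes V$ is defined by $$\mathcal D(F_a(z)\otimes e_a)=\Big(z\frac{d}{dz}F_a(z)+\beta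 z\,\mathrm{Res}_{\xi}\sum_{c=1}^s\frac{1}{\xi^2(1-z/\xi)}\varphi^-_c(\xi)\Phi_c^{-1}(\xi)\Phi_c(z)F_a(\xi)\Big)\otimes e_a,$$ where $\frac{1}{1-z/\xi}=\sum_{m\ge0}z^m\xi^{-m}$ and $\mathrm{Res}_\xi$ takes the coefficient of $\xi^{-1}$. The Heckman–Dunkl operator acting on $({\mathbb C}^s)^{\otimes N}$-valued polynomials in $x_1,\dots,x_N$ is $\mathcal D^{(N)}_1=x_1\frac{\partial}{\partial x_1}+\beta\sum_{j\ne1}\frac{x_1}{x_1-x_j}(1-K_{1j})$, where $K_{1j}$ swaps the variables $x_1,x_j$ (not the tensor factors). *)

theory Defs
  imports "HOL-Analysis.Analysis" "HOL-Library.Poly_Mapping" "HOL-Computational_Algebra.Polynomial"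
begin

text \<open>The ring \<open>\<hat>\<Lambda>\<close> = C[p_{a,k}] as polynomials (finitely supported
  coefficient maps on monomials); the variable p_{a,k} is indexed by the pair (a,k).
  Elements of \<open>\<hat>\<Lambda>[z]\<close> are of type lam poly.\<close>
type_synonym lam = "(nat \<times> nat \<Rightarrow>\<^sub>0 nat) \<Rightarrow>\<^sub>0 complex"

definition lam_var :: "nat \<Rightarrow> nat \<Rightarrow> lam" where
  "lam_var a k = Poly_Mapping.single (Poly_Mapping.single (a, k) 1) 1"

definition lam_const :: "complex \<Rightarrow> lam" where
  "lam_const b = Poly_Mapping.single 0 b"

definition lam_subst :: "(nat \<times> nat \<Rightarrow> 'r::comm_ring_1) \<Rightarrow> (complex \<Rightarrow> 'r) \<Rightarrow> lam \<Rightarrow> 'r" where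
  "lam_subst \<sigma> \<iota> f = (\<Sum>mo\<in>Poly_Mapping.keys f. \<iota> (Poly_Mapping.lookup f mo) * (\<Prod>v\<in>Poly_Mapping.keys (mo::nat \<times> nat \<Rightarrow>\<^sub>0 nat). \<sigma> v ^ Poly_Mapping.lookup mo v))"

definition vac :: "lam \<Rightarrow> complex" where
  "vac f = Poly_Mapping.lookup f 0"

definition Phi :: "nat \<Rightarrow> complex \<Rightarrow> lam \<Rightarrow> lam" where
  "Phi c w f = lam_subst (\<lambda>(a, k). lam_var a k + (if a = c then lam_const (w ^ k) else 0)) lam_const f"

text \<open>The composite substitution Phi_c^{-1}(xi) Phi_c(z), i.e. p_{c,k} \<mapsto> p_{c,k} + z^k - xi^k,
  landing in \<open>\<hat>\<Lambda>[z][xi]\<close> (type lam poly poly: outer variable xi, inner variable z).\<close>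
definition PhiInvPhi :: "nat \<Rightarrow> lam \<Rightarrow> lam poly poly" where
  "PhiInvPhi c f = lam_subst
     (\<lambda>(a, k). [:[:lam_var a k:]:] + (if a = c then [:monom 1 k:] - monom 1 k else 0))
     (\<lambda>b. [:[:lam_const b:]:]) f"

text \<open>Formal Laurent series in xi^{-1} (coefficient of xi^n at index n), product and residue.\<close>
definition lmult :: "(int \<Rightarrow> 'r::comm_ring_1) \<Rightarrow> (int \<Rightarrow> 'r) \<Rightarrow> int \<Rightarrow> 'r" where
  "lmult A B = (\<lambda>n. \<Sum>i\<in>{i. A i \<noteq> 0 \<and> B (n - i) \<noteq> 0}. A i * B (n - i))"

definition lres :: "(int \<Rightarrow> 'r) \<Rightarrow> 'r" where
  "lres A = A (-1)"

text \<open>1/(xi^2 (1 - z/xi)) = sum_m z^m xi^{-m-2}\<close>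
definition kernel_ser :: "int \<Rightarrow> lam poly" where
  "kernel_ser n = (if n \<le> -2 then [:0, 1:] ^ nat (-n - 2) else 0)"

text \<open>phi^-_c(xi) = sum_k p_{c,k} xi^{-k}\<close>
definition phi_minus :: "nat \<Rightarrow> int \<Rightarrow> lam poly" where
  "phi_minus c n = (if n \<le> 0 then [:lam_var c (nat (-n)):] else 0)"

text \<open>The polynomial Phi_c^{-1}(xi) Phi_c(z) F_a(xi) in xi, as a Laurent series.\<close>
definition shifted_ser :: "nat \<Rightarrow> lam poly \<Rightarrow> int \<Rightarrow> lam poly" where
  "shifted_ser c Fa n =
     (let G = (\<Sum>j\<le>degree Fa. PhiInvPhi c (coeff Fa j) * monom 1 j)
      in if 0 \<le> n then coeff G (nat n) else 0)"

definition zddz :: "lam poly \<Rightarrow> lam poly" where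
  "zddz p = Poly (map (\<lambda>j. of_nat j * coeff p j) [0..<Suc (degree p)])"

text \<open>The operator D on \<open>\<hat>\<Lambda>\<otimes>V\<close>; F a is the component F_a(z) (a = 1..s).\<close>
definition Dop :: "nat \<Rightarrow> complex \<Rightarrow> (nat \<Rightarrow> lam poly) \<Rightarrow> nat \<Rightarrow> lam poly" where
  "Dop s \<beta> F a = zddz (F a)
     + [:0, lam_const \<beta>:] *
       (\<Sum>c=1..s. lres (lmult (lmult kernel_ser (phi_minus c)) (shifted_ser c (F a))))"

text \<open>(pi_{N-1} \<otimes> 1) F, evaluated at the point x (x_1..x_N), component e_{c_1}\<otimes>..\<otimes>e_{c_N}.\<close>
definition pibar :: "nat \<Rightarrow> (nat \<Rightarrow> lam poly) \<Rightarrow> (nat \<Rightarrow> complex) \<Rightarrow> (nat \<Rightarrow> nat) \<Rightarrow> complex" where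
  "pibar N F x c = vac (fold (\<lambda>i h. Phi (c i) (x i) h) [2..<Suc N] (poly (F (c 1)) (lam_const (x 1))))"

text \<open>Heckman--Dunkl operator D_1^{(N)} applied to a (C^s)^{\<otimes>N}-valued function g.\<close>
definition dunkl1 :: "nat \<Rightarrow> complex \<Rightarrow> ((nat \<Rightarrow> complex) \<Rightarrow> (nat \<Rightarrow> nat) \<Rightarrow> complex)
    \<Rightarrow> (nat \<Rightarrow> complex) \<Rightarrow> (nat \<Rightarrow> nat) \<Rightarrow> complex" where
  "dunkl1 N \<beta> g x c = x 1 * deriv (\<lambda>t. g (x(1 := t)) c) (x 1)
     + \<beta> * (\<Sum>j=2..N. x 1 / (x 1 - x j) * (g x c - g (x(1 := x j, j := x 1)) c))"

end

theory Submission
  imports Defs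
begin

definition rhom :: "('a::comm_ring_1 \<Rightarrow> 'b::comm_ring_1) \<Rightarrow> bool" where
  "rhom h \<longleftrightarrow> (\<forall>x y. h (x + y) = h x + h y) \<and> (\<forall>x y. h (x * y) = h x * h y) \<and> h 1 = 1"

lemma rhom_add: "rhom h \<Longrightarrow> h (x + y) = h x + h y" by (simp add: rhom_def)
lemma rhom_mult: "rhom h \<Longrightarrow> h (x * y) = h x * h y" by (simp add: rhom_def)
lemma rhom_one: "rhom h \<Longrightarrow> h 1 = 1" by (simp add: rhom_def)
lemma rhom_zero: "rhom h \<Longrightarrow> h 0 = 0"
proof -
  assume "rhom h"
  then have "h (0 + 0) = h 0 + h 0" by (rule rhom_add)
  then show ?thesis by simp
qed
lemma rhom_uminus: "rhom h \<Longrightarrow> h (- x) = - h x"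
proof -
  assume h: "rhom h"
  have "h (x + - x) = h x + h (- x)" by (rule rhom_add[OF h])
  then show ?thesis using rhom_zero[OF h] by (simp add: eq_neg_iff_add_eq_0 add.commute)
qed
lemma rhom_diff: "rhom h \<Longrightarrow> h (x - y) = h x - h y"
  using rhom_add[of h x "- y"] rhom_uminus[of h y] by simp
lemma rhom_sum: "rhom h \<Longrightarrow> h (sum f A) = (\<Sum>a\<in>A. h (f a))"
  by (induction A rule: infinite_finite_induct) (simp_all add: rhom_zero rhom_add)
lemma rhom_prod: "rhom h \<Longrightarrow> h (prod f A) = (\<Prod>a\<in>A. h (f a))"
  by (induction A rule: infinite_finite_induct) (simp_all add: rhom_one rhom_mult)
lemma rhom_power: "rhom h \<Longrightarrow> h (x ^ n) = h x ^ n"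
  by (induction n) (simp_all add: rhom_one rhom_mult)
lemma rhom_of_nat: "rhom h \<Longrightarrow> h (of_nat n) = of_nat n"
  by (induction n) (simp_all add: rhom_one rhom_add rhom_zero)

lemma map_poly_add_h: "rhom h \<Longrightarrow> map_poly h (p + q) = map_poly h p + map_poly h q"
  by (rule poly_eqI) (simp add: coeff_map_poly rhom_zero rhom_add)
lemma map_poly_mult_h: "rhom h \<Longrightarrow> map_poly h (p * q) = map_poly h p * map_poly h q"
  by (rule poly_eqI) (simp add: coeff_map_poly rhom_zero rhom_sum rhom_mult coeff_mult)
lemma rhom_poly_eval: "rhom h \<Longrightarrow> rhom (\<lambda>p. poly (map_poly h p) y)"
  unfolding rhom_def[of "\<lambda>p. poly (map_poly h p) y"]
  by (simp add: map_poly_add_h map_poly_mult_h rhom_one)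
lemma hom_poly: "rhom h \<Longrightarrow> h (poly p y) = poly (map_poly h p) (h y)"
  by (induction p rule: pCons_induct) (simp_all add: map_poly_pCons rhom_zero rhom_add rhom_mult)
lemma map_poly_pderiv_h: "rhom h \<Longrightarrow> map_poly h (pderiv p) = pderiv (map_poly h p)"
  by (rule poly_eqI) (simp add: coeff_map_poly rhom_zero coeff_pderiv rhom_mult rhom_of_nat del: of_nat_Suc)

definition mon :: "(nat \<times> nat \<Rightarrow> 'r::comm_ring_1) \<Rightarrow> (nat \<times> nat \<Rightarrow>\<^sub>0 nat) \<Rightarrow> 'r" where
  "mon \<sigma> m = (\<Prod>v\<in>Poly_Mapping.keys m. \<sigma> v ^ Poly_Mapping.lookup m v)"

lemma mon_superset: "finite S \<Longrightarrow> Poly_Mapping.keys m \<subseteq> S \<Longrightarrow>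
   mon \<sigma> m = (\<Prod>v\<in>S. \<sigma> v ^ Poly_Mapping.lookup m v)"
  unfolding mon_def by (rule prod.mono_neutral_left) (auto simp: in_keys_iff)

lemma mon_add: "mon \<sigma> (m1 + m2) = mon \<sigma> m1 * mon \<sigma> m2"
proof -
  let ?S = "Poly_Mapping.keys m1 \<union> Poly_Mapping.keys m2"
  have "mon \<sigma> (m1 + m2) = (\<Prod>v\<in>?S. \<sigma> v ^ Poly_Mapping.lookup (m1 + m2) v)"
    by (rule mon_superset) (auto dest: keys_add[THEN subsetD])
  also have "\<dots> = (\<Prod>v\<in>?S. \<sigma> v ^ Poly_Mapping.lookup m1 v) * (\<Prod>v\<in>?S. \<sigma> v ^ Poly_Mapping.lookup m2 v)"
    by (simp add: lookup_add power_add prod.distrib)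
  also have "\<dots> = mon \<sigma> m1 * mon \<sigma> m2"
    by (simp add: mon_superset[of ?S m1] mon_superset[of ?S m2])
  finally show ?thesis .
qed

lemma mon_zero: "mon \<sigma> 0 = 1" by (simp add: mon_def)

lemma lsub_superset: "finite S \<Longrightarrow> Poly_Mapping.keys f \<subseteq> S \<Longrightarrow> \<iota> 0 = 0 \<Longrightarrow>
   lam_subst \<sigma> \<iota> f = (\<Sum>mo\<in>S. \<iota> (Poly_Mapping.lookup f mo) * mon \<sigma> mo)"
  unfolding lam_subst_def mon_def[symmetric] by (rule sum.mono_neutral_left) (auto simp: in_keys_iff)

definition ev :: "(nat \<times> nat \<Rightarrow> complex) \<Rightarrow> lam \<Rightarrow> complex" where
  "ev \<sigma> = lam_subst \<sigma> (\<lambda>b. b)"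

lemma ev_alt: "ev \<sigma> f = (\<Sum>mo\<in>Poly_Mapping.keys f. Poly_Mapping.lookup f mo * mon \<sigma> mo)"
  by (simp add: ev_def lam_subst_def mon_def)

lemma ev_single: "ev \<sigma> (Poly_Mapping.single m a) = a * mon \<sigma> m"
  by (simp add: ev_alt)

lemma ev_add: "ev \<sigma> (f + g) = ev \<sigma> f + ev \<sigma> g"
proof -
  let ?S = "Poly_Mapping.keys f \<union> Poly_Mapping.keys g"
  have "ev \<sigma> (f + g) = (\<Sum>mo\<in>?S. Poly_Mapping.lookup (f+g) mo * mon \<sigma> mo)"
    unfolding ev_def by (rule lsub_superset) (auto dest: keys_add[THEN subsetD])
  also have "\<dots> = (\<Sum>mo\<in>?S. Poly_Mapping.lookup f mo * mon \<sigma> mo) + (\<Sum>mo\<in>?S. Poly_Mapping.lookup g mo * mon \<sigma> mo)"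
    by (simp add: lookup_add distrib_right sum.distrib)
  also have "\<dots> = ev \<sigma> f + ev \<sigma> g"
    unfolding ev_def by (simp add: lsub_superset[of ?S f] lsub_superset[of ?S g])
  finally show ?thesis .
qed

lemma ev_zero: "ev \<sigma> 0 = 0" by (simp add: ev_alt)

lemma ev_sum: "ev \<sigma> (sum f A) = (\<Sum>a\<in>A. ev \<sigma> (f a))"
  by (induction A rule: infinite_finite_induct) (simp_all add: ev_zero ev_add)

lemma pm_expand: "f = (\<Sum>k\<in>Poly_Mapping.keys f. Poly_Mapping.single k (Poly_Mapping.lookup f k))"
  by (rule poly_mapping_eqI) (simp add: lookup_sum lookup_single when_def in_keys_iff sum.delta' split: if_splits)

lemma ev_mult: "ev \<sigma> (f * g) = ev \<sigma> f * ev \<sigma> g"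
proof -
  let ?F = "Poly_Mapping.keys f" and ?G = "Poly_Mapping.keys g"
  have "f * g = (\<Sum>k\<in>?F. Poly_Mapping.single k (Poly_Mapping.lookup f k)) *
                (\<Sum>l\<in>?G. Poly_Mapping.single l (Poly_Mapping.lookup g l))"
    by (subst pm_expand[of f], subst pm_expand[of g]) (rule refl)
  also have "\<dots> = (\<Sum>k\<in>?F. \<Sum>l\<in>?G. Poly_Mapping.single (k + l) (Poly_Mapping.lookup f k * Poly_Mapping.lookup g l))"
    by (simp add: sum_product mult_single)
  finally have "ev \<sigma> (f * g) = (\<Sum>k\<in>?F. \<Sum>l\<in>?G. (Poly_Mapping.lookup f k * mon \<sigma> k) * (Poly_Mapping.lookup g l * mon \<sigma> l))"
    by (simp add: ev_sum ev_single mon_add mult_ac)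
  also have "\<dots> = ev \<sigma> f * ev \<sigma> g"
    by (simp add: ev_alt sum_product)
  finally show ?thesis .
qed

lemma rhom_ev: "rhom (ev \<sigma>)"
  unfolding rhom_def using ev_single[of \<sigma> 0 1]
  by (simp add: ev_add ev_mult mon_zero)

lemma rhom_lam_subst: "rhom h \<Longrightarrow> h (lam_subst \<sigma> \<iota> f) = lam_subst (\<lambda>v. h (\<sigma> v)) (\<lambda>b. h (\<iota> b)) f"
  by (simp add: lam_subst_def rhom_sum rhom_mult rhom_prod rhom_power)

lemma ev_var: "ev \<sigma> (lam_var a k) = \<sigma> (a, k)"
  by (simp add: lam_var_def ev_single mon_def)
lemma ev_const: "ev \<sigma> (lam_const b) = b"
  by (simp add: lam_const_def ev_single mon_zero)

lemma vac_ev: "vac f = ev (\<lambda>_. 0) f"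
proof -
  have m: "mon (\<lambda>_. 0::complex) mo = (if mo = 0 then 1 else 0)" for mo
  proof (cases "mo = 0")
    case True then show ?thesis by (simp add: mon_zero)
  next
    case False
    then obtain v where v: "v \<in> Poly_Mapping.keys mo" by (metis keys_eq_empty ex_in_conv)
    then have "Poly_Mapping.lookup mo v \<noteq> 0" by (simp add: in_keys_iff)
    then show ?thesis using False v by (auto simp: mon_def prod_zero_iff)
  qed
  have "(\<Sum>mo\<in>Poly_Mapping.keys f. Poly_Mapping.lookup f mo * (if mo = 0 then 1 else 0))
     = (\<Sum>mo\<in>Poly_Mapping.keys f. if mo = 0 then Poly_Mapping.lookup f mo else 0)"
    by (rule sum.cong) auto
  also have "\<dots> = Poly_Mapping.lookup f 0"
    by (simp add: sum.delta in_keys_iff)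
  finally show ?thesis unfolding ev_alt m vac_def by simp
qed


lemma ev_Phi: "ev Q (Phi c w f) = ev (\<lambda>v. Q v + (if c = fst v then w ^ snd v else 0)) f"
proof -
  have "ev Q (Phi c w f) = lam_subst (\<lambda>v. ev Q ((\<lambda>(a, k). lam_var a k + (if a = c then lam_const (w ^ k) else 0)) v))
          (\<lambda>b. ev Q (lam_const b)) f"
    unfolding Phi_def by (rule rhom_lam_subst[OF rhom_ev])
  also have "(\<lambda>v. ev Q ((\<lambda>(a, k). lam_var a k + (if a = c then lam_const (w ^ k) else 0)) v))
       = (\<lambda>v. Q v + (if c = fst v then w ^ snd v else 0))"
    by (auto simp: ev_add ev_var ev_const ev_zero)
  also have "(\<lambda>b. ev Q (lam_const b)) = (\<lambda>b. b)"
    by (simp add: ev_const)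
  finally show ?thesis by (simp add: ev_def)
qed

lemma ev_fold: "ev Q (fold (\<lambda>i h. Phi (c i) (x i) h) xs h)
   = ev (\<lambda>v. Q v + (\<Sum>i\<leftarrow>xs. if c i = fst v then x i ^ snd v else 0)) h"
proof (induction xs arbitrary: Q h)
  case Nil then show ?case by simp
next
  case (Cons i xs)
  show ?case by (simp add: Cons ev_Phi add_ac)
qed

definition Pf :: "nat \<Rightarrow> (nat \<Rightarrow> complex) \<Rightarrow> (nat \<Rightarrow> nat) \<Rightarrow> nat \<times> nat \<Rightarrow> complex" where
  "Pf N x c v = (\<Sum>i\<in>{2..N}. if c i = fst v then x i ^ snd v else 0)"

lemma sum_list_upt2: "sum_list (map f [2..<Suc N]) = sum f {2..N}"
  by (metis sum_set_upt_conv_sum_list_nat set_upt atLeastLessThanSuc_atLeastAtMost)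

lemma pibar_eq: "pibar N F x c = poly (map_poly (ev (Pf N x c)) (F (c 1))) (x 1)"
proof -
  have "pibar N F x c = ev (Pf N x c) (poly (F (c 1)) (lam_const (x 1)))"
    unfolding pibar_def vac_ev ev_fold Pf_def sum_list_upt2 by simp
  also have "\<dots> = poly (map_poly (ev (Pf N x c)) (F (c 1))) (x 1)"
    by (simp add: hom_poly[OF rhom_ev] ev_const)
  finally show ?thesis .
qed

lemma Pf_upd1: "Pf N (x(1 := t)) c = Pf N x c"
  unfolding Pf_def by (intro ext sum.cong) auto

lemma Pf_swap: assumes j: "j \<in> {2..N}"
  shows "Pf N (x(1 := x j, j := x 1)) c = (\<lambda>v. Pf N x c v + (if fst v = c j then x 1 ^ snd v - x j ^ snd v else 0))"
proof
  fix v
  have f: "finite {2..N}" by simp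
  have e: "(\<Sum>i\<in>{2..N} - {j}. if c i = fst v then (x(1 := x j, j := x 1)) i ^ snd v else 0)
      = (\<Sum>i\<in>{2..N} - {j}. if c i = fst v then x i ^ snd v else 0)"
    by (rule sum.cong) auto
  have "Pf N (x(1 := x j, j := x 1)) c v = (if c j = fst v then x 1 ^ snd v else 0)
     + (\<Sum>i\<in>{2..N} - {j}. if c i = fst v then x i ^ snd v else 0)"
    unfolding Pf_def using j e
    by (subst sum.remove[OF f j]) auto
  moreover have "Pf N x c v = (if c j = fst v then x j ^ snd v else 0)
     + (\<Sum>i\<in>{2..N} - {j}. if c i = fst v then x i ^ snd v else 0)"
    unfolding Pf_def using j by (subst sum.remove[OF f j]) auto
  ultimately show "Pf N (x(1 := x j, j := x 1)) c v = Pf N x c v + (if fst v = c j then x 1 ^ snd v - x j ^ snd v else 0)"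
    by auto
qed


lemma poly_sum_upto: fixes p :: "'a::comm_ring_1 poly" assumes "\<forall>i>n. coeff p i = 0" shows "poly p y = (\<Sum>i\<le>n. coeff p i * y ^ i)"
proof -
  have d: "degree p \<le> n" using assms by (rule degree_le)
  show ?thesis unfolding poly_altdef
    by (rule sum.mono_neutral_left) (use d in \<open>auto simp: coeff_eq_0\<close>)
qed

lemma lmult_superset: "finite T \<Longrightarrow> {i. A i \<noteq> 0 \<and> B (n - i) \<noteq> 0} \<subseteq> T \<Longrightarrow>
   lmult A B n = (\<Sum>i\<in>T. A i * B (n - i))"
  unfolding lmult_def by (rule sum.mono_neutral_left) auto

lemma K_eq: "lmult kernel_ser (phi_minus c0) n = (\<Sum>i\<in>{n..-2}. kernel_ser i * phi_minus c0 (n - i))"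
  by (rule lmult_superset) (auto simp: kernel_ser_def phi_minus_def split: if_splits)

lemma K_zero: "n > -2 \<Longrightarrow> lmult kernel_ser (phi_minus c0) n = 0"
  by (simp add: K_eq)

lemma res_eq:
  fixes S :: "int \<Rightarrow> lam poly" and G :: "lam poly poly"
  assumes S: "S = (\<lambda>n. if 0 \<le> n then coeff G (nat n) else 0)"
  shows "lres (lmult (lmult kernel_ser (phi_minus c0)) S)
     = (\<Sum>i\<in>{-1 - int (degree G)..-2}. lmult kernel_ser (phi_minus c0) i * S (-1 - i))"
  unfolding lres_def
proof (rule lmult_superset)
  show "{i. lmult kernel_ser (phi_minus c0) i \<noteq> 0 \<and> S (- 1 - i) \<noteq> 0} \<subseteq> {-1 - int (degree G)..-2}"
  proof
    fix i assume i: "i \<in> {i. lmult kernel_ser (phi_minus c0) i \<noteq> 0 \<and> S (- 1 - i) \<noteq> 0}"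
    then have "i \<le> -2" using K_zero[of i c0] by force
    moreover have "nat (-1 - i) \<le> degree G"
      using i by (intro le_degree) (auto simp: S split: if_splits)
    ultimately show "i \<in> {-1 - int (degree G)..-2}" by auto
  qed
qed simp

lemma E_pCons: "rhom h \<Longrightarrow> poly (map_poly h (pCons a p)) y = h a + y * poly (map_poly h p) y"
  by (simp add: map_poly_pCons rhom_zero)

lemma Psi_PhiInvPhi:
  assumes h: "rhom (h :: lam \<Rightarrow> complex)"
  shows "poly (map_poly (\<lambda>q. poly (map_poly h q) z) (PhiInvPhi c0 f)) y
     = lam_subst (\<lambda>v. h (lam_var (fst v) (snd v)) + (if fst v = c0 then z ^ snd v - y ^ snd v else 0))
                 (\<lambda>b. h (lam_const b)) f"
proof -
  let ?E = "\<lambda>q. poly (map_poly h q) z"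
  let ?Psi = "\<lambda>g. poly (map_poly ?E g) y"
  have hE: "rhom ?E" by (rule rhom_poly_eval[OF h])
  have hP: "rhom ?Psi" by (rule rhom_poly_eval[OF hE])
  have E1: "?E 1 = 1" by (rule rhom_one[OF hE])
  show ?thesis
    unfolding PhiInvPhi_def rhom_lam_subst[OF hP]
  proof (intro arg_cong3[where f = lam_subst] ext refl)
    fix v :: "nat \<times> nat"
    obtain a k where v: "v = (a, k)" by (cases v)
    show "?Psi ((\<lambda>(a, k). [:[:lam_var a k:]:] + (if a = c0 then [:monom 1 k:] - monom 1 k else 0)) v)
        = h (lam_var (fst v) (snd v)) + (if fst v = c0 then z ^ snd v - y ^ snd v else 0)"
      using rhom_zero[OF h] rhom_zero[OF hE] E1 rhom_one[OF h]
      by (simp add: v rhom_add[OF hP] rhom_diff[OF hP] rhom_zero[OF hP] map_poly_pCons map_poly_monom poly_monom)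
  next
    fix b
    show "?Psi [:[:lam_const b:]:] = h (lam_const b)"
      using rhom_zero[OF h] rhom_zero[OF hE] by (simp add: map_poly_pCons)
  qed
qed

lemma core:
  fixes N :: nat and x :: "nat \<Rightarrow> complex" and c :: "nat \<Rightarrow> nat" and c0 :: nat and Fa :: "lam poly"
  assumes xne: "\<forall>j\<in>{2..N}. x j \<noteq> x 1"
  shows "poly (map_poly (ev (Pf N x c)) (lres (lmult (lmult kernel_ser (phi_minus c0)) (shifted_ser c0 Fa)))) (x 1)
    = (\<Sum>j\<in>{2..N}. if c j = c0 then
         (poly (map_poly (ev (Pf N x c)) Fa) (x 1) - poly (map_poly (ev (Pf N (x(1 := x j, j := x 1)) c)) Fa) (x j)) / (x 1 - x j)
       else 0)"
proof -
  define P where "P = Pf N x c"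
  define E where "E = (\<lambda>q::lam poly. poly (map_poly (ev P) q) (x 1))"
  define G where "G = (\<Sum>j\<le>degree Fa. PhiInvPhi c0 (coeff Fa j) * monom 1 j)"
  define D where "D = degree G"
  define e where "e m = E (coeff G m)" for m
  define K where "K = lmult kernel_ser (phi_minus c0)"
  define H where "H y = (\<Sum>m\<le>D. e m * y ^ m)" for y
  have hE: "rhom E" unfolding E_def by (rule rhom_poly_eval[OF rhom_ev])
  have S: "shifted_ser c0 Fa = (\<lambda>n. if 0 \<le> n then coeff G (nat n) else 0)"
    by (simp add: shifted_ser_def G_def Let_def fun_eq_iff)
  have Ex: "E [:0, 1:] = x 1" unfolding E_def by (simp add: E_pCons[OF rhom_ev] rhom_one[OF rhom_ev] ev_zero)
  have Ek: "E (kernel_ser (-2 - int u)) = x 1 ^ u" for u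
    by (simp add: kernel_ser_def rhom_power[OF hE] Ex)
  have Ephi: "E (phi_minus c0 (- int k)) = P (c0, k)" for k
    unfolding E_def by (simp add: phi_minus_def ev_var ev_zero map_poly_pCons)
  have EK: "E (K (-1 - int m)) = (\<Sum>u<m. x 1 ^ u * P (c0, m - 1 - u))" for m
  proof -
    have "E (K (-1 - int m)) = (\<Sum>i\<in>{-1 - int m..-2}. E (kernel_ser i) * E (phi_minus c0 (-1 - int m - i)))"
      unfolding K_def K_eq by (simp add: rhom_sum[OF hE] rhom_mult[OF hE])
    also have "\<dots> = (\<Sum>u<m. x 1 ^ u * P (c0, m - 1 - u))"
    proof (rule sum.reindex_bij_witness[where i = "\<lambda>u. -2 - int u" and j = "\<lambda>i. nat (-2 - i)"])
      fix i assume i: "i \<in> {-1 - int m..-2}"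
      define u where "u = nat (-2 - i)"
      have iu: "i = -2 - int u" and um: "u < m" using i by (auto simp: u_def)
      have eq: "-1 - int m - i = - int (m - 1 - u)" using iu um by auto
      have "E (kernel_ser i) = x 1 ^ u" using Ek[of u] iu by simp
      moreover have "E (phi_minus c0 (-1 - int m - i)) = P (c0, m - 1 - u)" using Ephi[of "m - 1 - u"] eq by simp
      ultimately show "x 1 ^ nat (-2 - i) * P (c0, m - 1 - nat (-2 - i)) = E (kernel_ser i) * E (phi_minus c0 (-1 - int m - i))"
        by (simp add: u_def)
    qed auto
    finally show ?thesis .
  qed
  have step1: "E (lres (lmult K (shifted_ser c0 Fa))) = (\<Sum>i\<in>{-1 - int D..-2}. E (K i) * E (coeff G (nat (-1 - i))))"
    unfolding K_def res_eq[OF S] D_def by (simp add: rhom_sum[OF hE] rhom_mult[OF hE] S)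
  also have "\<dots> = (\<Sum>m\<in>{1..D}. (\<Sum>u<m. x 1 ^ u * P (c0, m - 1 - u)) * e m)"
  proof (rule sum.reindex_bij_witness[where i = "\<lambda>m. -1 - int m" and j = "\<lambda>i. nat (-1 - i)"])
    fix i assume i: "i \<in> {-1 - int D..-2}"
    then have "i = -1 - int (nat (-1 - i))" by auto
    then have "E (K i) = (\<Sum>u<nat (-1 - i). x 1 ^ u * P (c0, nat (-1 - i) - 1 - u))"
      using EK[of "nat (-1 - i)"] by simp
    then show "(\<Sum>u<nat (-1 - i). x 1 ^ u * P (c0, nat (-1 - i) - 1 - u)) * e (nat (-1 - i)) = E (K i) * E (coeff G (nat (-1 - i)))"
      by (simp add: e_def)
  qed auto
  finally have step12: "E (lres (lmult K (shifted_ser c0 Fa))) = (\<Sum>m\<in>{1..D}. (\<Sum>u<m. x 1 ^ u * P (c0, m - 1 - u)) * e m)" .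
  define Q where "Q y = (\<lambda>v. P v + (if fst v = c0 then x 1 ^ snd v - y ^ snd v else 0))" for y
  have step5: "H y = poly (map_poly (ev (Q y)) Fa) y" for y
  proof -
    let ?Psi = "\<lambda>g. poly (map_poly E g) y"
    have hP: "rhom ?Psi" by (rule rhom_poly_eval[OF hE])
    have "H y = poly (map_poly E G) y" unfolding H_def e_def
      by (subst poly_sum_upto[of D]) (auto simp: coeff_map_poly rhom_zero[OF hE] D_def coeff_eq_0)
    also have "\<dots> = (\<Sum>j\<le>degree Fa. ?Psi (PhiInvPhi c0 (coeff Fa j)) * ?Psi (monom 1 j))"
      unfolding G_def by (simp add: rhom_sum[OF hP] rhom_mult[OF hP])
    also have "\<dots> = (\<Sum>j\<le>degree Fa. ev (Q y) (coeff Fa j) * y ^ j)"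
    proof (rule sum.cong[OF refl])
      fix j
      have m: "?Psi (monom 1 j) = y ^ j"
        by (simp add: map_poly_monom rhom_zero[OF hE] rhom_one[OF hE] poly_monom)
      have "?Psi (PhiInvPhi c0 (coeff Fa j)) = lam_subst (\<lambda>v. ev P (lam_var (fst v) (snd v)) + (if fst v = c0 then x 1 ^ snd v - y ^ snd v else 0))
                 (\<lambda>b. ev P (lam_const b)) (coeff Fa j)"
        unfolding E_def by (rule Psi_PhiInvPhi[OF rhom_ev])
      also have "\<dots> = ev (Q y) (coeff Fa j)"
        unfolding ev_var ev_const by (simp add: Q_def ev_def)
      finally show "?Psi (PhiInvPhi c0 (coeff Fa j)) * ?Psi (monom 1 j) = ev (Q y) (coeff Fa j) * y ^ j"
        using m by simp
    qed
    also have "\<dots> = poly (map_poly (ev (Q y)) Fa) y"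
      by (subst poly_sum_upto[of "degree Fa"]) (auto simp: coeff_map_poly ev_zero coeff_eq_0)
    finally show ?thesis .
  qed
  have QP: "Q (x 1) = P" by (simp add: Q_def fun_eq_iff)
  have step4: "(\<Sum>m\<in>{1..D}. e m * (\<Sum>u<m. x j ^ (m - Suc u) * x 1 ^ u)) = (H (x 1) - H (x j)) / (x 1 - x j)"
    if j: "j \<in> {2..N}" for j
  proof -
    have ne: "x 1 - x j \<noteq> 0" using xne j by auto
    have "(\<Sum>m\<in>{1..D}. e m * (\<Sum>u<m. x j ^ (m - Suc u) * x 1 ^ u)) * (x 1 - x j)
        = (\<Sum>m\<in>{1..D}. e m * (x 1 ^ m - x j ^ m))"
    proof -
      have pd: "(\<Sum>u<m. x j ^ (m - Suc u) * x 1 ^ u) * (x 1 - x j) = x 1 ^ m - x j ^ m" for m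
        using power_diff_sumr2[of "x 1" m "x j"] by (simp add: mult.commute)
      show ?thesis unfolding sum_distrib_right by (simp only: mult.assoc pd)
    qed
    also have "\<dots> = (\<Sum>m\<le>D. e m * (x 1 ^ m - x j ^ m))"
    proof -
      have "{..D} = insert 0 {1..D}" by auto
      then show ?thesis by simp
    qed
    also have "\<dots> = H (x 1) - H (x j)"
      by (simp add: H_def right_diff_distrib sum_subtractf)
    finally show ?thesis using ne by (simp add: eq_divide_eq)
  qed
  have step3: "(\<Sum>m\<in>{1..D}. (\<Sum>u<m. x 1 ^ u * P (c0, m - 1 - u)) * e m)
     = (\<Sum>j\<in>{2..N}. if c j = c0 then (\<Sum>m\<in>{1..D}. e m * (\<Sum>u<m. x j ^ (m - Suc u) * x 1 ^ u)) else 0)"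
  proof -
    have "(\<Sum>m\<in>{1..D}. (\<Sum>u<m. x 1 ^ u * P (c0, m - 1 - u)) * e m)
       = (\<Sum>m\<in>{1..D}. \<Sum>u<m. \<Sum>j\<in>{2..N}. if c j = c0 then e m * (x j ^ (m - Suc u) * x 1 ^ u) else 0)"
      unfolding P_def Pf_def
      by (simp add: sum_distrib_left sum_distrib_right mult_ac if_distrib cong: if_cong)
    also have "\<dots> = (\<Sum>m\<in>{1..D}. \<Sum>j\<in>{2..N}. \<Sum>u<m. if c j = c0 then e m * (x j ^ (m - Suc u) * x 1 ^ u) else 0)"
      by (rule sum.cong[OF refl], rule sum.swap)
    also have "\<dots> = (\<Sum>j\<in>{2..N}. \<Sum>m\<in>{1..D}. \<Sum>u<m. if c j = c0 then e m * (x j ^ (m - Suc u) * x 1 ^ u) else 0)"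
      by (rule sum.swap)
    also have "\<dots> = (\<Sum>j\<in>{2..N}. if c j = c0 then (\<Sum>m\<in>{1..D}. e m * (\<Sum>u<m. x j ^ (m - Suc u) * x 1 ^ u)) else 0)"
      by (rule sum.cong[OF refl]) (simp add: sum_distrib_left)
    finally show ?thesis .
  qed
  have "poly (map_poly (ev (Pf N x c)) (lres (lmult (lmult kernel_ser (phi_minus c0)) (shifted_ser c0 Fa)))) (x 1)
     = E (lres (lmult K (shifted_ser c0 Fa)))" by (simp add: E_def P_def K_def)
  also have "\<dots> = (\<Sum>j\<in>{2..N}. if c j = c0 then (H (x 1) - H (x j)) / (x 1 - x j) else 0)"
    unfolding step12 step3
  proof (rule sum.cong[OF refl])
    fix j assume "j \<in> {2..N}"
    from step4[OF this] show "(if c j = c0 then (\<Sum>m\<in>{1..D}. e m * (\<Sum>u<m. x j ^ (m - Suc u) * x 1 ^ u)) else 0)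
       = (if c j = c0 then (H (x 1) - H (x j)) / (x 1 - x j) else 0)" by (simp only:)
  qed
  also have "\<dots> = (\<Sum>j\<in>{2..N}. if c j = c0 then
         (poly (map_poly (ev (Pf N x c)) Fa) (x 1) - poly (map_poly (ev (Pf N (x(1 := x j, j := x 1)) c)) Fa) (x j)) / (x 1 - x j)
       else 0)"
  proof (rule sum.cong[OF refl])
    fix j assume j: "j \<in> {2..N}"
    show "(if c j = c0 then (H (x 1) - H (x j)) / (x 1 - x j) else 0) = (if c j = c0 then
         (poly (map_poly (ev (Pf N x c)) Fa) (x 1) - poly (map_poly (ev (Pf N (x(1 := x j, j := x 1)) c)) Fa) (x j)) / (x 1 - x j)
       else 0)"
    proof (cases "c j = c0")
      case True
      have "Q (x j) = Pf N (x(1 := x j, j := x 1)) c"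
        unfolding Pf_swap[OF j] Q_def P_def True ..
      moreover have "Q (x (Suc 0)) = P" using QP by simp
      ultimately show ?thesis using True by (simp add: step5 P_def)
    qed simp
  qed
  finally show ?thesis .
qed


lemma coeff_zddz: "coeff (zddz p) n = of_nat n * coeff p n"
proof (cases "n \<le> degree p")
  case True
  then show ?thesis by (simp add: zddz_def nth_default_def del: upt_Suc)
next
  case False
  then show ?thesis by (simp add: zddz_def nth_default_def coeff_eq_0 del: upt_Suc)
qed

lemma map_zddz: "rhom h \<Longrightarrow> map_poly h (zddz p) = pCons 0 (pderiv (map_poly h p))"
  by (rule poly_eqI) (auto simp: coeff_map_poly rhom_zero coeff_zddz rhom_mult rhom_of_nat coeff_pCons coeff_pderiv
      simp del: of_nat_Suc split: nat.splits)

theorem proposition3p1: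
  fixes s N :: nat and \<beta> :: complex and F :: "nat \<Rightarrow> lam poly"
    and x :: "nat \<Rightarrow> complex" and c :: "nat \<Rightarrow> nat"
  assumes "s \<ge> 1" and "N \<ge> 2"
    and "\<forall>a\<in>{1..s}. \<forall>j. \<forall>m\<in>Poly_Mapping.keys (coeff (F a) j). \<forall>v\<in>Poly_Mapping.keys m. fst v \<in> {1..s}"
    and "\<forall>i\<in>{1..N}. c i \<in> {1..s}"
    and "\<forall>j\<in>{2..N}. x j \<noteq> x 1"
  shows "pibar N (Dop s \<beta> F) x c = dunkl1 N \<beta> (pibar N F) x c"
proof -
  note cs = assms(4) and xne = assms(5)
  define P where "P = Pf N x c"
  define E where "E = (\<lambda>q::lam poly. poly (map_poly (ev P) q) (x 1))"
  define Fa where "Fa = F (c 1)"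
  define g where "g = map_poly (ev P) Fa"
  define T where "T j = (poly (map_poly (ev (Pf N x c)) Fa) (x 1) - poly (map_poly (ev (Pf N (x(1 := x j, j := x 1)) c)) Fa) (x j)) / (x 1 - x j)" for j
  have hE: "rhom E" unfolding E_def by (rule rhom_poly_eval[OF rhom_ev])
  have Ez: "E (zddz Fa) = x 1 * poly (pderiv g) (x 1)"
    unfolding E_def g_def map_zddz[OF rhom_ev] by simp
  have Eb: "E [:0, lam_const \<beta>:] = x 1 * \<beta>"
    unfolding E_def by (simp add: E_pCons[OF rhom_ev] ev_zero ev_const)
  have Ec: "E (lres (lmult (lmult kernel_ser (phi_minus c0)) (shifted_ser c0 Fa)))
      = (\<Sum>j\<in>{2..N}. if c j = c0 then T j else 0)" for c0
    unfolding E_def P_def T_def by (rule core[OF xne])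
  have sumc: "(\<Sum>c0=1..s. \<Sum>j\<in>{2..N}. if c j = c0 then T j else 0) = (\<Sum>j\<in>{2..N}. T j)"
  proof -
    have "(\<Sum>c0=1..s. \<Sum>j\<in>{2..N}. if c j = c0 then T j else 0) = (\<Sum>j\<in>{2..N}. \<Sum>c0=1..s. if c j = c0 then T j else 0)"
      by (rule sum.swap)
    also have "\<dots> = (\<Sum>j\<in>{2..N}. T j)"
    proof (rule sum.cong[OF refl])
      fix j assume "j \<in> {2..N}"
      then have "c j \<in> {1..s}" using cs by auto
      then show "(\<Sum>c0=1..s. if c j = c0 then T j else 0) = T j" by (simp add: sum.delta)
    qed
    finally show ?thesis .
  qed
  have LHS: "pibar N (Dop s \<beta> F) x c = x 1 * poly (pderiv g) (x 1) + x 1 * \<beta> * (\<Sum>j\<in>{2..N}. T j)"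
  proof -
    have "pibar N (Dop s \<beta> F) x c = E (Dop s \<beta> F (c 1))"
      unfolding pibar_eq E_def P_def ..
    also have "\<dots> = x 1 * poly (pderiv g) (x 1) + x 1 * \<beta> * (\<Sum>j\<in>{2..N}. T j)"
      unfolding Dop_def Fa_def[symmetric] rhom_add[OF hE] rhom_mult[OF hE] rhom_sum[OF hE] Ez Eb Ec sumc ..
    finally show ?thesis .
  qed
  have upd: "pibar N F (x(1 := t)) c = poly g t" for t
    unfolding pibar_eq Pf_upd1 g_def P_def Fa_def by simp
  have der: "deriv (\<lambda>t. pibar N F (x(1 := t)) c) (x 1) = poly (pderiv g) (x 1)"
    unfolding upd by (rule DERIV_imp_deriv[OF poly_DERIV])
  have sw: "pibar N F x c - pibar N F (x(1 := x j, j := x 1)) c = (x 1 - x j) * T j" if j: "j \<in> {2..N}" for j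
  proof -
    have ne: "x 1 - x j \<noteq> 0" using xne j by auto
    have j1: "j \<noteq> 1" using j by auto
    have "pibar N F x c - pibar N F (x(1 := x j, j := x 1)) c
       = poly (map_poly (ev (Pf N x c)) Fa) (x 1) - poly (map_poly (ev (Pf N (x(1 := x j, j := x 1)) c)) Fa) (x j)"
      unfolding pibar_eq Fa_def using j1 by simp
    then show ?thesis using ne unfolding T_def by simp
  qed
  have RHS: "dunkl1 N \<beta> (pibar N F) x c = x 1 * poly (pderiv g) (x 1) + x 1 * \<beta> * (\<Sum>j\<in>{2..N}. T j)"
  proof -
    have "(\<Sum>j = 2..N. x 1 / (x 1 - x j) * (pibar N F x c - pibar N F (x(1 := x j, j := x 1)) c))
        = (\<Sum>j = 2..N. x 1 * T j)"
    proof (rule sum.cong[OF refl])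
      fix j assume j: "j \<in> {2..N}"
      have ne: "x 1 - x j \<noteq> 0" using xne j by auto
      show "x 1 / (x 1 - x j) * (pibar N F x c - pibar N F (x(1 := x j, j := x 1)) c) = x 1 * T j"
        unfolding sw[OF j] using ne by simp
    qed
    then show ?thesis unfolding dunkl1_def der
      by (simp add: sum_distrib_left mult_ac)
  qed
  show ?thesis using LHS RHS by simp
qed

end
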